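(* Let $(R,\mathfrak{m})$ be a commutative Artinian local ring with identity, $\mathfrak{m}\neq0$ and $\mathfrak{m}^2=0$, and let $n\ge7$ be an integer. If $n$ is odd, then $\{3,4,5,\dots,n-4\}\cup\{n-2,n\}\subseteq L(x^n)$. If $n$ is even, then $\{2,3,4,5,\dots,n-4\}\cup\{n-2,n\}\subseteq L(x^n)$.
   Context: A nonunit polynomial in $R[x]$ is irreducible if in any factorization into two polynomials one factor is a unit of $R[x]$. A positive integer $k$ is a length of $f$ if $f$ is a product of $k$ irreducible polynomials of $R[x]$; $L(f)$ denotes the set of lengths of $f$. *)

theory Defs
  imports "HOL-Computational_Algebra.Polynomial" "HOL-Computational_Algebra.Factorial_Ring"
begin

definition is_ideal :: "'a::comm_ring_1 set \<Rightarrow> bool" where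
  "is_ideal I \<longleftrightarrow> 0 \<in> I \<and> (\<forall>a\<in>I. \<forall>b\<in>I. a + b \<in> I) \<and> (\<forall>a\<in>I. \<forall>r. r * a \<in> I)"

definition maximal_ideal :: "'a::comm_ring_1 set \<Rightarrow> bool" where
  "maximal_ideal M \<longleftrightarrow> is_ideal M \<and> M \<noteq> UNIV \<and>
     (\<forall>J. is_ideal J \<and> M \<subseteq> J \<longrightarrow> J = M \<or> J = UNIV)"

definition artinian :: "'a::comm_ring_1 itself \<Rightarrow> bool" where
  "artinian _ \<longleftrightarrow> (\<forall>I :: nat \<Rightarrow> 'a set. (\<forall>k. is_ideal (I k) \<and> I (Suc k) \<subseteq> I k)
      \<longrightarrow> (\<exists>N. \<forall>k\<ge>N. I k = I N))"

definition lengths :: "'a::comm_ring_1 poly \<Rightarrow> nat set" where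
  "lengths f = {k. k > 0 \<and> (\<exists>fs. length fs = k \<and> (\<forall>g\<in>set fs. irreducible g) \<and> prod_list fs = f)}"

end

theory Submission
  imports Defs
begin

lemma xpow_monom: "([:0,1:] :: 'a::comm_ring_1 poly) ^ n = monom 1 n"
  by (simp add: monom_altdef)

lemma inv_aux: "(C::'b::comm_ring_1) * D = 1 \<Longrightarrow> H * H = 0 \<Longrightarrow> (C + H) * (D - D*D*H) = 1"
proof -
  assume a: "C * D = 1" "H * H = 0"
  have "(C + H) * (D - D*D*H) = C*D - (C*D)*D*H + H*D - D*D*(H*H)" by (simp add: algebra_simps)
  then show ?thesis using a by (simp add: mult.commute)
qed

locale lr =
  fixes m :: "'a::comm_ring_1 set"
  assumes idl: "is_ideal m"
    and one: "1 \<notin> m"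
    and unit: "\<And>a. a \<notin> m \<Longrightarrow> \<exists>b. a * b = 1"
    and sq: "\<And>a b. a \<in> m \<Longrightarrow> b \<in> m \<Longrightarrow> a * b = 0"
begin

lemma zero_m: "0 \<in> m" using idl unfolding is_ideal_def by auto
lemma add_m: "a \<in> m \<Longrightarrow> b \<in> m \<Longrightarrow> a + b \<in> m" using idl unfolding is_ideal_def by auto
lemma mulL: "a \<in> m \<Longrightarrow> r * a \<in> m" using idl unfolding is_ideal_def by auto
lemma mulR: "a \<in> m \<Longrightarrow> a * r \<in> m" using mulL[of a r] by (simp add: mult.commute)
lemma neg_m: "a \<in> m \<Longrightarrow> - a \<in> m" using mulL[of a "-1"] by simp
lemma diff_m: "a \<in> m \<Longrightarrow> b \<in> m \<Longrightarrow> a - b \<in> m"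
  using add_m[of a "-b"] neg_m[of b] by simp

lemma sum_m: "finite A \<Longrightarrow> (\<And>x. x \<in> A \<Longrightarrow> f x \<in> m) \<Longrightarrow> sum f A \<in> m"
  by (induction A rule: finite_induct) (auto intro: add_m zero_m)

lemma unit_prod_notin: "a \<notin> m \<Longrightarrow> b \<notin> m \<Longrightarrow> a * b \<notin> m"
proof
  assume a: "a \<notin> m" and b: "b \<notin> m" and ab: "a * b \<in> m"
  obtain c where c: "a * c = 1" using unit[OF a] by blast
  obtain d where d: "b * d = 1" using unit[OF b] by blast
  have "(a*b) * (c*d) = 1" using c d by (metis mult.assoc mult.commute mult_1_right)
  moreover have "(a*b)*(c*d) \<in> m" using mulR[OF ab] .
  ultimately show False using one by simp
qed

lemma notin_plus: "u \<notin> m \<Longrightarrow> s \<in> m \<Longrightarrow> u + s \<notin> m"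
  using diff_m[of "u+s" s] by auto

lemma core:
  fixes f g :: "'a poly"
  assumes "i \<le> n" "\<forall>k\<le>n. k \<noteq> i \<longrightarrow> coeff f k * coeff g (n-k) \<in> m"
    "coeff f i \<notin> m" "coeff g (n-i) \<notin> m"
  shows "coeff (f*g) n \<notin> m"
proof -
  have "coeff (f*g) n = (\<Sum>k\<le>n. coeff f k * coeff g (n-k))" by (rule coeff_mult)
  also have "\<dots> = coeff f i * coeff g (n-i) + (\<Sum>k\<in>{..n}-{i}. coeff f k * coeff g (n-k))"
    using assms(1) by (subst sum.remove[of _ i]) auto
  finally have e: "coeff (f*g) n = coeff f i * coeff g (n-i) + (\<Sum>k\<in>{..n}-{i}. coeff f k * coeff g (n-k))" .
  have "(\<Sum>k\<in>{..n}-{i}. coeff f k * coeff g (n-k)) \<in> m"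
    using assms(2) by (intro sum_m) auto
  then show ?thesis unfolding e using unit_prod_notin[OF assms(3,4)] notin_plus by blast
qed

lemma low_prod:
  fixes f g :: "'a poly"
  assumes "\<forall>p<i. coeff f p \<in> m" "coeff f i \<notin> m" "\<forall>q<l. coeff g q \<in> m" "coeff g l \<notin> m"
  shows "coeff (f*g) (i+l) \<notin> m"
proof -
  have "\<forall>k\<le>i+l. k \<noteq> i \<longrightarrow> coeff f k * coeff g (i+l-k) \<in> m"
  proof (intro allI impI)
    fix k assume "k \<le> i+l" "k \<noteq> i"
    show "coeff f k * coeff g (i+l-k) \<in> m"
    proof (cases "k < i")
      case True then show ?thesis using assms(1) mulR by blast
    next
      case False then have "i+l-k < l" using \<open>k \<noteq> i\<close> \<open>k \<le> i+l\<close> by auto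
      then show ?thesis using assms(3) mulL by blast
    qed
  qed
  then show ?thesis using core[of i "i+l" f g] assms by auto
qed

lemma high_prod:
  fixes f g :: "'a poly"
  assumes "\<forall>p>i. coeff f p \<in> m" "coeff f i \<notin> m" "\<forall>q>l. coeff g q \<in> m" "coeff g l \<notin> m"
  shows "coeff (f*g) (i+l) \<notin> m"
proof -
  have "\<forall>k\<le>i+l. k \<noteq> i \<longrightarrow> coeff f k * coeff g (i+l-k) \<in> m"
  proof (intro allI impI)
    fix k assume "k \<le> i+l" "k \<noteq> i"
    show "coeff f k * coeff g (i+l-k) \<in> m"
    proof (cases "k > i")
      case True then show ?thesis using assms(1) mulR by blast
    next
      case False then have "i+l-k > l" using \<open>k \<noteq> i\<close> \<open>k \<le> i+l\<close> by auto
      then show ?thesis using assms(3) mulL by blast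
    qed
  qed
  then show ?thesis using core[of i "i+l" f g] assms by auto
qed

lemma all_m_prod:
  fixes f g :: "'a poly"
  assumes "\<forall>p. coeff f p \<in> m"
  shows "coeff (f*g) n \<in> m"
  unfolding coeff_mult using assms by (intro sum_m) (auto intro: mulR)

lemma mm_zero:
  fixes f g :: "'a poly"
  assumes "\<forall>p. coeff f p \<in> m" "\<forall>p. coeff g p \<in> m"
  shows "f * g = 0"
  by (rule poly_eqI) (simp add: coeff_mult assms sq)

lemma least_ex:
  fixes f :: "'a poly"
  assumes "\<exists>p. coeff f p \<notin> m"
  obtains i where "\<forall>p<i. coeff f p \<in> m" "coeff f i \<notin> m"
proof -
  let ?i = "LEAST p. coeff f p \<notin> m"
  have "coeff f ?i \<notin> m" using assms by (metis LeastI)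
  moreover have "\<forall>p<?i. coeff f p \<in> m" using not_less_Least by blast
  ultimately show ?thesis using that by blast
qed

lemma greatest_ex:
  fixes f :: "'a poly"
  assumes "\<exists>p. coeff f p \<notin> m"
  obtains i where "\<forall>p>i. coeff f p \<in> m" "coeff f i \<notin> m"
proof -
  let ?S = "{p. coeff f p \<notin> m}"
  have fin: "finite ?S"
  proof (rule finite_subset[of _ "{..degree f}"])
    show "?S \<subseteq> {..degree f}"
      using zero_m by (auto simp: not_le) (metis coeff_eq_0 not_le zero_m)
  qed auto
  have ne: "?S \<noteq> {}" using assms by auto
  have "Max ?S \<in> ?S" using Max_in[OF fin ne] .
  moreover have "\<forall>p>Max ?S. coeff f p \<in> m" using Max_ge[OF fin] by (meson not_le mem_Collect_eq)
  ultimately show ?thesis using that by blast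
qed

lemma single_index:
  fixes f g F :: "'a poly"
  assumes F: "F = f * g" and Fj: "\<forall>p. p \<noteq> j \<longrightarrow> coeff F p \<in> m" "coeff F j \<notin> m"
  shows "\<exists>i l. i + l = j \<and> (\<forall>p. p \<noteq> i \<longrightarrow> coeff f p \<in> m) \<and> coeff f i \<notin> m
            \<and> (\<forall>p. p \<noteq> l \<longrightarrow> coeff g p \<in> m) \<and> coeff g l \<notin> m"
proof -
  have ef: "\<exists>p. coeff f p \<notin> m"
    using all_m_prod[of f g j] Fj F by auto
  have eg: "\<exists>p. coeff g p \<notin> m"
    using all_m_prod[of g f j] Fj F by (auto simp: mult.commute)
  obtain i where i: "\<forall>p<i. coeff f p \<in> m" "coeff f i \<notin> m" using least_ex[OF ef] by blast
  obtain l where l: "\<forall>p<l. coeff g p \<in> m" "coeff g l \<notin> m" using least_ex[OF eg] by blast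
  obtain i' where i': "\<forall>p>i'. coeff f p \<in> m" "coeff f i' \<notin> m" using greatest_ex[OF ef] by blast
  obtain l' where l': "\<forall>p>l'. coeff g p \<in> m" "coeff g l' \<notin> m" using greatest_ex[OF eg] by blast
  have "i + l = j" using low_prod[OF i l] Fj F by auto
  moreover have "i' + l' = j" using high_prod[OF i' l'] Fj F by auto
  moreover have "i \<le> i'" using i(2) i'(1) by (meson not_le)
  moreover have "l \<le> l'" using l(2) l'(1) by (meson not_le)
  ultimately have "i = i'" "l = l'" by auto
  then show ?thesis using i i' l l' \<open>i + l = j\<close>
    by (metis linorder_neqE_nat)
qed

lemma unit_poly:
  fixes f :: "'a poly"
  assumes "\<forall>p. p \<noteq> 0 \<longrightarrow> coeff f p \<in> m" "coeff f 0 \<notin> m"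
  shows "f dvd 1"
proof -
  obtain d where d: "coeff f 0 * d = 1" using unit assms(2) by blast
  define H where "H = f - [:coeff f 0:]"
  have Hm: "\<forall>p. coeff H p \<in> m"
    using assms(1) zero_m unfolding H_def by (auto simp: coeff_pCons split: nat.splits)
  have HH: "H * H = 0" using mm_zero[OF Hm Hm] .
  have CD: "[:coeff f 0:] * [:d:] = 1" using d by (simp add: one_pCons mult.commute)
  have fe: "f = [:coeff f 0:] + H" unfolding H_def by simp
  have "f * ([:d:] - [:d:] * [:d:] * H) = 1"
    using inv_aux[OF CD HH] fe by simp
  then show ?thesis by (metis dvdI)
qed

lemma irr:
  fixes F :: "'a poly"
  assumes j: "j \<ge> 1" and Fj: "\<forall>p. p \<noteq> j \<longrightarrow> coeff F p \<in> m" "coeff F j \<notin> m"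
    and c0: "j = 1 \<or> coeff F 0 \<noteq> 0"
  shows "irreducible F"
  unfolding irreducible_def
proof (intro conjI allI impI)
  show "F \<noteq> 0" using Fj zero_m by auto
  show "\<not> F dvd 1"
  proof
    assume "F dvd 1"
    then obtain g where g: "1 = F * g" by (auto elim: dvdE)
    have e: "\<exists>p. coeff g p \<notin> m" using all_m_prod[of g F 0] g one by (auto simp: mult.commute)
    obtain l where l: "\<forall>p<l. coeff g p \<in> m" "coeff g l \<notin> m" using least_ex[OF e] by blast
    have "coeff (F*g) (j+l) \<notin> m" using low_prod[OF _ Fj(2) l] Fj(1) by auto
    then have "coeff (1::'a poly) (j+l) \<notin> m" using g by simp
    then show False using j zero_m by (auto simp: coeff_1)
  qed
  fix a b assume ab: "F = a * b"
  obtain i l where il: "i + l = j" "\<forall>p. p \<noteq> i \<longrightarrow> coeff a p \<in> m" "coeff a i \<notin> m"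
    "\<forall>p. p \<noteq> l \<longrightarrow> coeff b p \<in> m" "coeff b l \<notin> m"
    using single_index[OF ab Fj] by blast
  show "a dvd 1 \<or> b dvd 1"
  proof (cases "i = 0 \<or> l = 0")
    case True then show ?thesis using il unit_poly by blast
  next
    case False
    then have "coeff a 0 \<in> m" "coeff b 0 \<in> m" using il by auto
    then have "coeff F 0 = 0" using ab sq by (simp add: coeff_mult)
    moreover have "j \<noteq> 1" using False il(1) by auto
    ultimately show ?thesis using c0 by simp
  qed
qed

end


lemma triple_id: "(A::'b::comm_ring_1)*A = 0 \<Longrightarrow> (P+A)*(P*Y+A)*(P*Y - A - A*Y) = P*P*P*Y*Y"
proof -
  assume h: "A*A = 0"
  have "(P+A)*(P*Y+A)*(P*Y - A - A*Y) = P*P*P*Y*Y + (A*A)*(P*Y - P*(1+Y)*(1+Y) - A*(1+Y))"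
    by (simp add: algebra_simps)
  then show ?thesis using h by simp
qed

context lr
begin

lemma irr_x: "irreducible ([:0,1:] :: 'a poly)"
  by (rule irr[of 1]) (auto simp: zero_m one coeff_pCons split: nat.splits)

lemma irr_plus:
  assumes "a \<in> m" "a \<noteq> 0" "e \<ge> 1"
  shows "irreducible (([:0,1:] :: 'a poly) ^ e + [:a:])"
  unfolding xpow_monom
  by (rule irr[of e]) (use assms in \<open>auto simp: zero_m one coeff_pCons split: nat.splits\<close>)

lemma irr_minus:
  assumes "a \<in> m" "a \<noteq> 0" "e \<ge> 1"
  shows "irreducible (([:0,1:] :: 'a poly) ^ e - [:a:])"
  unfolding xpow_monom
  by (rule irr[of e]) (use assms in \<open>auto simp: zero_m one neg_m coeff_pCons split: nat.splits\<close>)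

lemma irr_three:
  assumes "a \<in> m" "a \<noteq> 0" "e \<ge> 3"
  shows "irreducible (([:0,1:] :: 'a poly) ^ e - [:a:] - [:a:] * [:0,1:] ^ (e-2))"
proof -
  have eq: "[:a:] * ([:0,1:] :: 'a poly) ^ (e-2) = monom a (e-2)"
    by (simp add: monom_altdef)
  have "\<forall>p. p \<noteq> e \<longrightarrow> coeff (monom 1 e - [:a:] - monom a (e-2) :: 'a poly) p \<in> m"
    using assms by (auto simp: zero_m neg_m diff_m coeff_pCons split: nat.splits)
  moreover have "coeff (monom 1 e - [:a:] - monom a (e-2) :: 'a poly) e \<notin> m"
    using assms one by (auto simp: coeff_pCons split: nat.splits)
  moreover have "coeff (monom 1 e - [:a:] - monom a (e-2) :: 'a poly) 0 \<noteq> 0"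
    using assms by auto
  ultimately have "irreducible (monom 1 e - [:a:] - monom a (e-2) :: 'a poly)"
    using irr[of e] assms by auto
  then show ?thesis unfolding eq unfolding xpow_monom[of e] .
qed

lemma LA:
  assumes a: "a \<in> m" "a \<noteq> 0" and k: "2 \<le> k" "k \<le> n" "even (n - k)"
  shows "k \<in> lengths (([:0,1:] :: 'a poly) ^ n)"
proof -
  define i where "i = (n + 2 - k) div 2"
  have i1: "i \<ge> 1" and n2: "2*i \<le> n" and kk: "n - 2*i + 2 = k"
    using k unfolding i_def by (auto elim!: evenE)
  let ?X = "[:0,1:] :: 'a poly"
  define fs where "fs = [?X^i + [:a:], ?X^i - [:a:]] @ replicate (n - 2*i) ?X"
  have "length fs = k" unfolding fs_def using kk by simp
  moreover have "\<forall>g\<in>set fs. irreducible g"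
    unfolding fs_def using irr_x irr_plus[OF a i1] irr_minus[OF a i1] by auto
  moreover have "prod_list fs = ?X ^ n"
  proof -
    have aa: "[:a:] * [:a:] = (0::'a poly)" using sq[OF a(1) a(1)] by simp
    have "(?X^i + [:a:]) * (?X^i - [:a:]) = ?X^i * ?X^i - [:a:]*[:a:]"
      by (simp add: algebra_simps)
    also have "\<dots> = ?X^(2*i)" using aa by (simp add: power_add[symmetric] mult_2)
    finally have h: "(?X^i + [:a:]) * (?X^i - [:a:]) = ?X^(2*i)" .
    have "prod_list fs = ((?X^i + [:a:]) * (?X^i - [:a:])) * ?X^(n-2*i)"
      unfolding fs_def by (simp add: mult.assoc)
    also have "\<dots> = ?X^(2*i) * ?X^(n-2*i)" unfolding h ..
    also have "\<dots> = ?X^n" using n2 by (simp add: power_add[symmetric])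
    finally show ?thesis .
  qed
  ultimately show ?thesis unfolding lengths_def using k by auto
qed

lemma LB:
  assumes a: "a \<in> m" "a \<noteq> 0" and k: "3 \<le> k" "k + 5 \<le> n" "odd (n - k)"
  shows "k \<in> lengths (([:0,1:] :: 'a poly) ^ n)"
proof -
  define e where "e = (n + 1 - k) div 2"
  have e3: "e \<ge> 3" and n2: "2 + 2*e \<le> n" and kk: "n - 2 - 2*e + 3 = k"
    using k unfolding e_def by (auto elim!: oddE)
  let ?X = "[:0,1:] :: 'a poly"
  have e1: "e \<ge> 1" using e3 by simp
  have two: "(2::nat) \<ge> 1" by simp
  define fs where "fs = [?X^2 + [:a:], ?X^e + [:a:], ?X^e - [:a:] - [:a:] * ?X^(e-2)] @ replicate (n - 2 - 2*e) ?X"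
  have "length fs = k" unfolding fs_def using kk by simp
  moreover have "\<forall>g\<in>set fs. irreducible g"
    unfolding fs_def using irr_x irr_plus[OF a two] irr_plus[OF a e1] irr_three[OF a e3] by auto
  moreover have "prod_list fs = ?X ^ n"
  proof -
    have aa: "[:a:] * [:a:] = (0::'a poly)" using sq[OF a(1) a(1)] by simp
    have ee: "e = 2 + (e-2)" using e3 by simp
    have xe: "?X^e = ?X^2 * ?X^(e-2)" by (subst ee) (rule power_add)
    have "(?X^2 + [:a:]) * (?X^e + [:a:]) * (?X^e - [:a:] - [:a:] * ?X^(e-2))
         = ?X^2 * ?X^2 * ?X^2 * ?X^(e-2) * ?X^(e-2)"
      unfolding xe by (rule triple_id[OF aa])
    also have "\<dots> = ?X^(2+2+2+(e-2)+(e-2))" by (simp only: power_add)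
    also have "2+2+2+(e-2)+(e-2) = 2 + 2*e" using e3 by simp
    finally have h: "(?X^2 + [:a:]) * (?X^e + [:a:]) * (?X^e - [:a:] - [:a:] * ?X^(e-2)) = ?X^(2 + 2*e)" .
    have "prod_list fs = ((?X^2 + [:a:]) * (?X^e + [:a:]) * (?X^e - [:a:] - [:a:] * ?X^(e-2))) * ?X^(n-2-2*e)"
      unfolding fs_def by (simp add: mult.assoc)
    also have "\<dots> = ?X^(2+2*e) * ?X^(n-2-2*e)" unfolding h ..
    also have "\<dots> = ?X^(2+2*e + (n-2-2*e))" by (simp only: power_add)
    also have "2+2*e + (n-2-2*e) = n" using n2 by simp
    finally show ?thesis .
  qed
  ultimately show ?thesis unfolding lengths_def using k by auto
qed

end


theorem lemma4p13:
  fixes m :: "'a::comm_ring_1 set" and n :: nat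
  assumes "artinian TYPE('a)"
    and "maximal_ideal m"
    and "\<forall>J. maximal_ideal J \<longrightarrow> J = m"
    and "m \<noteq> {0}"
    and "\<forall>a\<in>m. \<forall>b\<in>m. a * b = 0"
    and "n \<ge> 7"
  shows "(odd n \<longrightarrow> {3..n-4} \<union> {n-2, n} \<subseteq> lengths ([:0, 1:] ^ n :: 'a poly))
       \<and> (even n \<longrightarrow> {2..n-4} \<union> {n-2, n} \<subseteq> lengths ([:0, 1:] ^ n :: 'a poly))"
proof -
  have idl: "is_ideal m" using assms(2) unfolding maximal_ideal_def by blast
  have one: "1 \<notin> m"
  proof
    assume "1 \<in> m"
    then have "\<forall>r. r * 1 \<in> m" using idl unfolding is_ideal_def by blast
    then have "m = UNIV" by auto
    then show False using assms(2) unfolding maximal_ideal_def by blast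
  qed
  have unit: "\<exists>b. a * b = 1" if a: "a \<notin> m" for a
  proof -
    have z: "0 \<in> m" and ad: "\<And>x y. x \<in> m \<Longrightarrow> y \<in> m \<Longrightarrow> x + y \<in> m"
      and ml: "\<And>x r. x \<in> m \<Longrightarrow> r * x \<in> m"
      using idl unfolding is_ideal_def by auto
    define J where "J = {t + r * a | t r. t \<in> m}"
    have Jmem: "x \<in> J \<longleftrightarrow> (\<exists>t r. x = t + r * a \<and> t \<in> m)" for x
      unfolding J_def by blast
    have "is_ideal J" unfolding is_ideal_def
    proof (intro conjI ballI allI)
      have "(0::'a) = 0 + 0 * a" by simp
      then show "0 \<in> J" using z Jmem by blast
    next
      fix x y assume "x \<in> J" "y \<in> J"
      then obtain t1 r1 t2 r2 where h: "x = t1 + r1*a" "y = t2 + r2*a" "t1 \<in> m" "t2 \<in> m"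
        using Jmem by meson
      have "x + y = (t1 + t2) + (r1 + r2) * a" using h by (simp add: algebra_simps)
      moreover have "t1 + t2 \<in> m" using ad h by blast
      ultimately show "x + y \<in> J" using Jmem by blast
    next
      fix x s assume "x \<in> J"
      then obtain t1 r1 where h: "x = t1 + r1*a" "t1 \<in> m" using Jmem by meson
      have "s * x = s * t1 + (s * r1) * a" using h by (simp add: algebra_simps)
      moreover have "s * t1 \<in> m" using ml h by blast
      ultimately show "s * x \<in> J" using Jmem by blast
    qed
    moreover have "m \<subseteq> J"
    proof
      fix x assume "x \<in> m"
      moreover have "x = x + 0 * a" by simp
      ultimately show "x \<in> J" using Jmem by blast
    qed
    moreover have "a \<in> J"
    proof -
      have "a = 0 + 1 * a" by simp
      then show ?thesis using Jmem z by blast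
    qed
    ultimately have "J = m \<or> J = UNIV" using assms(2) unfolding maximal_ideal_def by simp
    then have "J = UNIV" using a \<open>a \<in> J\<close> by auto
    then have "1 \<in> J" by simp
    then obtain t r where tr: "1 = t + r * a" "t \<in> m" using Jmem by meson
    have ra: "r * a = 1 - t" using tr(1) by (simp add: eq_diff_eq add.commute)
    have "a * (r * (1 + t)) = (r * a) * (1 + t)" by (simp add: algebra_simps)
    also have "\<dots> = (1 - t) * (1 + t)" by (simp only: ra)
    also have "\<dots> = 1 - t * t" by (simp add: algebra_simps)
    also have "\<dots> = 1" using assms(5) tr(2) by simp
    finally show ?thesis by blast
  qed
  interpret lr m
    by unfold_locales (use idl one unit assms(5) in auto)
  obtain a where a: "a \<in> m" "a \<noteq> 0" using assms(4) zero_m by blast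
  have S: "k \<in> lengths ([:0, 1:] ^ n :: 'a poly)"
    if "2 \<le> k" "k \<le> n" "even (n - k)" for k using LA[OF a that] .
  have O: "k \<in> lengths ([:0, 1:] ^ n :: 'a poly)"
    if "3 \<le> k" "k + 5 \<le> n" "odd (n - k)" for k using LB[OF a that] .
  show ?thesis
  proof (intro conjI impI subsetI)
    fix k assume n: "odd n" and k: "k \<in> {3..n-4} \<union> {n-2, n}"
    show "k \<in> lengths ([:0, 1:] ^ n :: 'a poly)"
    proof (cases "even (n - k)")
      case True then show ?thesis using S k assms(6) by auto
    next
      case False
      have "k \<noteq> n" using False by auto
      moreover have "k \<noteq> n - 2"
      proof
        assume "k = n - 2" then have "n - k = 2" using assms(6) by simp
        then show False using False by simp
      qed
      ultimately have k3: "3 \<le> k" "k \<le> n - 4" using k by auto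
      have "n - k \<noteq> 4"
      proof
        assume "n - k = 4" then have "even (n - k)" by simp
        then show False using False by simp
      qed
      then have "k + 5 \<le> n" using k3 assms(6) by linarith
      then show ?thesis using O k3 False by auto
    qed
  next
    fix k assume n: "even n" and k: "k \<in> {2..n-4} \<union> {n-2, n}"
    show "k \<in> lengths ([:0, 1:] ^ n :: 'a poly)"
    proof (cases "even (n - k)")
      case True then show ?thesis using S k assms(6) by auto
    next
      case False
      have "k \<noteq> n" using False by auto
      moreover have "k \<noteq> n - 2"
      proof
        assume "k = n - 2" then have "n - k = 2" using assms(6) by simp
        then show False using False by simp
      qed
      ultimately have k3: "2 \<le> k" "k \<le> n - 4" using k by auto
      have "k \<noteq> 2" using False n by auto
      have "n - k \<noteq> 4"
      proof
        assume "n - k = 4" then have "even (n - k)" by simp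
        then show False using False by simp
      qed
      then have "k + 5 \<le> n" "3 \<le> k" using k3 \<open>k \<noteq> 2\<close> assms(6) by linarith+
      then show ?thesis using O False by auto
    qed
  qed
qed

end
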